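(* For integers $a\ge1$ and $d\ge-1$, \[ \operatorname*{Res}_{z=2}\frac{f_a(z)}{z^2(z-2)^d}\,\mathrm{d}z=\big(-\tfrac12\big)^{a+d+1}, \] where $f_a(z)=\big(-\frac{z(z-1)}{z-2}\frac{\mathrm{d}}{\mathrm{d}z}\big)^a\frac{2-2z}{z-2}$.
   Context: Equivalently, with $x=\frac{z-1}{z^2}$, $f_a(z)=\sum_{\mu\ge1}\binom{2\mu}{\mu}\mu^ax^\mu$; each $f_a$ is a rational function of $z$. *)

theory Defs
  imports "HOL-Complex_Analysis.Complex_Analysis"
begin

definition thetaOp :: "(complex \<Rightarrow> complex) \<Rightarrow> complex \<Rightarrow> complex" where
  "thetaOp g = (\<lambda>z. - (z * (z - 1) / (z - 2)) * deriv g z)"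

definition f_fun :: "nat \<Rightarrow> complex \<Rightarrow> complex" where
  "f_fun a = (thetaOp ^^ a) (\<lambda>z. (2 - 2 * z) / (z - 2))"

end

theory Submission
  imports Defs
begin

definition SS :: "complex set" where "SS = - {0, 2}"
abbreviation "\<gamma> \<equiv> circlepath (2::complex) 1"

lemma open_SS: "open SS"
  unfolding SS_def by (intro open_Compl finite_imp_closed) auto

lemma path_SS: "path_image \<gamma> \<subseteq> SS"
  unfolding SS_def by (auto simp: dist_norm)

lemma integ: "F holomorphic_on SS \<Longrightarrow> F contour_integrable_on \<gamma>"
  using contour_integrable_holomorphic_simple open_SS path_SS valid_path_circlepath by blast

lemma by_parts:
  assumes g: "g holomorphic_on SS"
    and h: "\<And>z. z \<in> SS \<Longrightarrow> (h has_field_derivative h' z) (at z)"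
    and h': "h' holomorphic_on SS"
  shows "contour_integral \<gamma> (\<lambda>z. h z * deriv g z) = - contour_integral \<gamma> (\<lambda>z. h' z * g z)"
proof -
  have hh: "h holomorphic_on SS"
    by (subst holomorphic_on_open[OF open_SS]) (use h in blast)
  have "((\<lambda>z. h' z * g z + h z * deriv g z) has_contour_integral 0) \<gamma>"
  proof (rule Cauchy_theorem_primitive[of SS "\<lambda>z. h z * g z"])
    fix x assume x: "x \<in> SS"
    have dg: "(g has_field_derivative deriv g x) (at x)"
      using holomorphic_derivI[OF g open_SS x] .
    show "((\<lambda>z. h z * g z) has_field_derivative h' x * g x + h x * deriv g x) (at x within SS)"
      using DERIV_mult[OF h[OF x] dg] by (simp add: has_field_derivative_at_within mult.commute)
  qed (use path_SS in auto)
  then have "contour_integral \<gamma> (\<lambda>z. h' z * g z + h z * deriv g z) = 0"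
    by (rule contour_integral_unique)
  moreover have "contour_integral \<gamma> (\<lambda>z. h' z * g z + h z * deriv g z) =
     contour_integral \<gamma> (\<lambda>z. h' z * g z) + contour_integral \<gamma> (\<lambda>z. h z * deriv g z)"
    by (intro contour_integral_add integ holomorphic_intros h' g hh open_SS)
  ultimately show ?thesis by (simp add: eq_neg_iff_add_eq_0 add.commute)
qed

lemma f_fun_Suc: "f_fun (Suc a) = thetaOp (f_fun a)"
  by (simp add: f_fun_def)

lemma holo_f: "f_fun a holomorphic_on (- {2})"
proof (induction a)
  case 0
  then show ?case unfolding f_fun_def by (auto intro!: holomorphic_intros)
next
  case (Suc a)
  have o: "open (- {2::complex})" by (simp add: open_Compl)
  show ?case unfolding f_fun_Suc thetaOp_def
    by (intro holomorphic_intros Suc o) auto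
qed

lemma holo_fS: "f_fun a holomorphic_on SS"
  by (rule holomorphic_on_subset[OF holo_f]) (auto simp: SS_def)

lemma pw_add: "w \<noteq> 0 \<Longrightarrow> (w::complex) powi (d + int k) = w powi d * w ^ k"
  by (simp add: power_int_add)

definition J :: "nat \<Rightarrow> int \<Rightarrow> complex" where
  "J a d = contour_integral \<gamma> (\<lambda>z. f_fun a z / (z\<^sup>2 * (z - 2) powi d))"

lemma integJ: "(\<lambda>z. f_fun a z / (z\<^sup>2 * (z - 2) powi d)) contour_integrable_on \<gamma>"
  by (intro integ holomorphic_intros holo_fS) (auto simp: SS_def)

lemma pw_facts:
  assumes "(w::complex) \<noteq> 0"
  shows "w powi (d+1) = w powi d * w" "w powi (d+2) = w powi d * w^2"
    "w powi (-(d+1)) = inverse (w powi d * w)" "w powi (-(d+1)-1) = inverse (w powi d * w^2)"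
    "w powi d \<noteq> 0"
proof -
  show a: "w powi (d+1) = w powi d * w" using assms by (simp add: power_int_add)
  show b: "w powi (d+2) = w powi d * w^2" using pw_add[OF assms, of d 2] by simp
  show "w powi (-(d+1)) = inverse (w powi d * w)" using a power_int_minus[of w "d+1"] by simp
  have e: "-(d+1)-1 = -(d+2)" by simp
  show "w powi (-(d+1)-1) = inverse (w powi d * w^2)"
    unfolding e using b power_int_minus[of w "d+2"] by simp
  show "w powi d \<noteq> 0" using assms by simp
qed

lemma pt1:
  assumes "(z::complex) \<noteq> 0" "z \<noteq> 2"
  shows "- (z * (z - 1) / (z - 2)) * D / (z\<^sup>2 * (z - 2) powi d) = -(z-1)/z * (z-2) powi (-(d+1)) * D"
proof -
  have w: "z - 2 \<noteq> 0" using assms by simp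
  note pw = pw_facts[OF w, of d]
  show ?thesis unfolding pw(3) using assms pw(5) w by (simp add: field_simps power2_eq_square)
qed

lemma pt2_core:
  fixes w p G c :: complex
  assumes "w + 2 \<noteq> 0" "w \<noteq> 0" "p \<noteq> 0"
  shows "- ((-(1/(w+2)^2) * inverse (p*w) + (-(w+1)/(w+2)) * ((-c) * inverse (p*w^2))) * G)
    = G/((w+2)\<^sup>2*(p*w)) - c*(G/((w+2)\<^sup>2*p) + 3*(G/((w+2)\<^sup>2*(p*w)))
      + 2*(G/((w+2)\<^sup>2*(p*w^2))))"
proof -
  have f: "w^2 + 3*w + 2 = (w+1)*(w+2)" by (simp add: algebra_simps power2_eq_square)
  have e: "(w+1)/(w+2) = (w^2 + 3*w + 2)/(w+2)^2" unfolding f using assms(1)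
    by (simp add: power2_eq_square)
  show ?thesis unfolding e using assms
    by (simp add: divide_simps) (simp add: algebra_simps power2_eq_square)
qed

lemma pt2:
  assumes "(z::complex) \<noteq> 0" "z \<noteq> 2"
  shows "- ((-(1/z^2) * (z-2) powi (-(d+1)) + (-(z-1)/z) * (of_int (-(d+1)) * (z-2) powi (-(d+1)-1))) * G)
    = G/(z\<^sup>2*(z-2) powi (d+1)) - of_int(d+1)*(G/(z\<^sup>2*(z-2) powi d) + 3*(G/(z\<^sup>2*(z-2) powi (d+1)))
      + 2*(G/(z\<^sup>2*(z-2) powi (d+2))))"
proof -
  have w: "z - 2 \<noteq> 0" using assms by simp
  note pw = pw_facts[OF w, of d]
  have z: "z = (z-2) + 2" "z - 1 = (z-2)+1" by simp_all
  have c: "(of_int (-(d+1)) :: complex) = - of_int (d+1)" by simp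
  show ?thesis unfolding pw(1-4) c
    using pt2_core[of "z-2" "(z-2) powi d" "of_int (d+1)" G] pw(5) w assms
    by (simp add: z[symmetric])
qed

lemma SS_mem: "z \<in> SS \<longleftrightarrow> z \<noteq> 0 \<and> z \<noteq> 2"
  by (auto simp: SS_def)

lemma path_mem: "z \<in> path_image \<gamma> \<Longrightarrow> z \<noteq> 0 \<and> z \<noteq> 2"
  using path_SS SS_mem by blast

lemma J_rec: "J (Suc a) d = J a (d+1) - of_int (d+1) * (J a d + 3 * J a (d+1) + 2 * J a (d+2))"
proof -
  define g where "g = f_fun a"
  define h where "h = (\<lambda>z::complex. -(z-1)/z * (z-2) powi (-(d+1)))"
  define h' where "h' = (\<lambda>z::complex. -(1/z^2) * (z-2) powi (-(d+1)) + (-(z-1)/z) * (of_int (-(d+1)) * (z-2) powi (-(d+1)-1)))"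
  have hd: "(h has_field_derivative h' z) (at z)" if "z \<in> SS" for z
  proof -
    have z: "z \<noteq> 0" "z - 2 \<noteq> 0" using that SS_mem by auto
    have dA: "((\<lambda>z. -(z-1)/z) has_field_derivative -(1/z^2)) (at z)"
    proof -
      have "((\<lambda>z. -(z-1)/z) has_field_derivative (-(1 * z) - (-(z-1)) * 1) / (z*z)) (at z)"
        using DERIV_divide[OF DERIV_minus[OF DERIV_diff[OF DERIV_ident DERIV_const]] DERIV_ident z(1)]
        by simp
      then show ?thesis using z by (simp add: field_simps power2_eq_square)
    qed
    have dB: "((\<lambda>z. (z-2) powi (-(d+1))) has_field_derivative
               of_int (-(d+1)) * (z-2) powi (-(d+1)-1)) (at z)"
    proof -
      have "((\<lambda>z. z-2) has_field_derivative 1) (at z)"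
        by (auto intro!: derivative_eq_intros)
      from DERIV_power_int[OF this, where n="-(d+1)"] z show ?thesis by simp
    qed
    show ?thesis unfolding h_def h'_def
      using DERIV_mult[OF dA dB] by (simp add: mult_ac)
  qed
  have hh': "h' holomorphic_on SS" unfolding h'_def
    by (intro holomorphic_intros) (auto simp: SS_mem)
  have "J (Suc a) d = contour_integral \<gamma> (\<lambda>z. h z * deriv g z)"
    unfolding J_def f_fun_Suc thetaOp_def g_def h_def
    by (rule contour_integral_cong) (use path_mem pt1 in auto)
  also have "\<dots> = - contour_integral \<gamma> (\<lambda>z. h' z * g z)"
    by (rule by_parts[OF _ hd hh']) (auto simp: g_def holo_fS)
  also have "\<dots> = contour_integral \<gamma> (\<lambda>z. - (h' z * g z))"
    by (simp add: contour_integral_neg)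
  also have "\<dots> = contour_integral \<gamma> (\<lambda>z. g z/(z\<^sup>2*(z-2) powi (d+1)) - of_int(d+1)*(g z/(z\<^sup>2*(z-2) powi d) + 3*(g z/(z\<^sup>2*(z-2) powi (d+1)))
      + 2*(g z/(z\<^sup>2*(z-2) powi (d+2)))))"
    unfolding h'_def by (rule contour_integral_cong) (use path_mem pt2 in auto)
  also have "\<dots> = J a (d+1) - of_int (d+1) * (J a d + 3 * J a (d+1) + 2 * J a (d+2))"
  proof -
    define F where "F k = (\<lambda>z. f_fun a z / (z\<^sup>2 * (z - 2) powi k))" for k
    have I: "F k contour_integrable_on \<gamma>" for k unfolding F_def by (rule integJ)
    have I2: "(\<lambda>z. F d z + 3 * F (d+1) z + 2 * F (d+2) z) contour_integrable_on \<gamma>"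
      by (intro contour_integrable_add contour_integrable_lmul I)
    have "contour_integral \<gamma> (\<lambda>z. F (d+1) z - of_int (d+1) * (F d z + 3 * F (d+1) z + 2 * F (d+2) z))
       = contour_integral \<gamma> (F (d+1)) - of_int (d+1) * (contour_integral \<gamma> (F d) + 3 * contour_integral \<gamma> (F (d+1)) + 2 * contour_integral \<gamma> (F (d+2)))"
      apply (subst contour_integral_diff)
        apply (rule I)
       apply (intro contour_integrable_lmul I2)
      apply (subst contour_integral_lmul[OF I2])
      apply (subst contour_integral_add)
        apply (intro contour_integrable_add contour_integrable_lmul I)
       apply (intro contour_integrable_lmul I)
      apply (subst contour_integral_add)
        apply (intro contour_integrable_lmul I)
       apply (intro contour_integrable_lmul I)
      apply (simp add: contour_integral_lmul I)
      done
    then show ?thesis unfolding J_def g_def F_def by simp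
  qed
  finally show ?thesis .
qed

definition K :: "int \<Rightarrow> complex" where
  "K n = contour_integral \<gamma> (\<lambda>z. 1 / (z\<^sup>2 * (z - 2) powi n))"

lemma integK: "(\<lambda>z. 1 / (z\<^sup>2 * (z - 2) powi n)) contour_integrable_on \<gamma>"
  by (intro integ holomorphic_intros) (auto simp: SS_def)

lemma f0: "f_fun 0 = (\<lambda>z. (2 - 2 * z) / (z - 2))"
  by (simp add: f_fun_def)

lemma J0: "J 0 d = -2 * K d - 2 * K (d+1)"
proof -
  have "J 0 d = contour_integral \<gamma> (\<lambda>z. (-2) * (1 / (z\<^sup>2 * (z - 2) powi d)) + (-2) * (1 / (z\<^sup>2 * (z - 2) powi (d+1))))"
    unfolding J_def f0
  proof (rule contour_integral_cong)
    fix z assume "z \<in> path_image \<gamma>"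
    then have z: "z \<noteq> 0" "z - 2 \<noteq> 0" using path_mem by auto
    note pw = pw_facts[OF z(2), of d]
    show "(2 - 2 * z) / (z - 2) / (z\<^sup>2 * (z - 2) powi d) =
      (-2) * (1 / (z\<^sup>2 * (z - 2) powi d)) + (-2) * (1 / (z\<^sup>2 * (z - 2) powi (d+1)))"
      unfolding pw(1) using z pw(5) by (simp add: field_simps)
  qed simp
  also have "\<dots> = -2 * K d - 2 * K (d+1)"
    unfolding K_def
    apply (subst contour_integral_add)
      apply (intro contour_integrable_lmul integK)
     apply (intro contour_integrable_lmul integK)
    apply (subst contour_integral_lmul, rule integK)+
    apply simp
    done
  finally show ?thesis .
qed

lemma K_rec: "0 = - K n - of_int n * (K n + 2 * K (n+1))"
proof -
  define h where "h = (\<lambda>z::complex. inverse z * (z-2) powi (-n))"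
  define h' where "h' = (\<lambda>z::complex. -(1/z^2) * (z-2) powi (-n) + inverse z * (of_int (-n) * (z-2) powi (-n-1)))"
  have hd: "(h has_field_derivative h' z) (at z within SS)" if "z \<in> SS" for z
  proof -
    have z: "z \<noteq> 0" "z - 2 \<noteq> 0" using that SS_mem by auto
    have dA: "((\<lambda>z. inverse z) has_field_derivative -(1/z^2)) (at z)"
      using DERIV_inverse[OF z(1), of UNIV] by (simp add: power2_eq_square divide_inverse inverse_mult_distrib)
    have dB: "((\<lambda>z. (z-2) powi (-n)) has_field_derivative
               of_int (-n) * (z-2) powi (-n-1)) (at z)"
    proof -
      have "((\<lambda>z. z-2) has_field_derivative 1) (at z)"
        by (auto intro!: derivative_eq_intros)
      from DERIV_power_int[OF this, where n="-n"] z show ?thesis by simp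
    qed
    show ?thesis unfolding h_def h'_def
      using DERIV_mult[OF dA dB] by (simp add: mult_ac has_field_derivative_at_within)
  qed
  have "(h' has_contour_integral 0) \<gamma>"
    by (rule Cauchy_theorem_primitive[OF hd]) (use path_SS in auto)
  then have "0 = contour_integral \<gamma> h'" by (simp add: contour_integral_unique)
  also have "\<dots> = contour_integral \<gamma> (\<lambda>z. -(1 / (z\<^sup>2 * (z - 2) powi n)) - of_int n * (1 / (z\<^sup>2 * (z - 2) powi n) + 2 * (1 / (z\<^sup>2 * (z - 2) powi (n+1)))))"
  proof (rule contour_integral_cong)
    fix z assume "z \<in> path_image \<gamma>"
    then have z: "z \<noteq> 0" "z - 2 \<noteq> 0" using path_mem by auto
    note pw = pw_facts[OF z(2), of "n-1"]
    define p where "p = (z-2) powi n"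
    have p: "p \<noteq> 0" using z p_def by simp
    have e1: "(z-2) powi (-n) = inverse p" unfolding p_def by (simp add: power_int_minus)
    have e2: "(z-2) powi (-n-1) = inverse (p * (z-2))"
      using power_int_minus[of "z-2" "n+1"] pw_facts[OF z(2), of n] unfolding p_def by simp
    have e3: "(z-2) powi (n+1) = p * (z-2)" using pw_facts[OF z(2), of n] unfolding p_def by simp
    have zz: "z = (z-2) + 2" by simp
    have core: "-(1/(u^2)) * inverse p + inverse u * ((-c) * inverse (p*w))
       = -(1/(u\<^sup>2 * p)) - c * (1/(u\<^sup>2 * p) + 2 * (1/(u\<^sup>2*(p*w))))"
      if "w \<noteq> 0" "u \<noteq> 0" "u = w + 2" for w u c :: complex
    proof -
      have "c * (1/(u\<^sup>2 * p) + 2 * (1/(u\<^sup>2*(p*w)))) = c * ((w + 2)/(u\<^sup>2*(p*w)))"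
        using that(1,2) p by (simp add: field_simps)
      also have "\<dots> = c * inverse u * inverse (p*w)" unfolding that(3)[symmetric]
        using that(1,2) p by (simp add: field_simps power2_eq_square)
      finally show ?thesis by (simp add: field_simps)
    qed
    show "h' z = -(1 / (z\<^sup>2 * (z - 2) powi n)) - of_int n * (1 / (z\<^sup>2 * (z - 2) powi n) + 2 * (1 / (z\<^sup>2 * (z - 2) powi (n+1))))"
      unfolding h'_def e1 e2 e3 p_def[symmetric]
      using core[of "z-2" z "of_int n"] z by simp
  qed simp
  also have "\<dots> = - K n - of_int n * (K n + 2 * K (n+1))"
    unfolding K_def
    apply (subst contour_integral_diff)
      apply (intro contour_integrable_neg integK)
     apply (intro contour_integrable_lmul contour_integrable_add integK)
    apply (subst contour_integral_lmul)
     apply (intro contour_integrable_lmul contour_integrable_add integK)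
    apply (subst contour_integral_add)
      apply (intro contour_integrable_lmul contour_integrable_add integK)
     apply (intro contour_integrable_lmul contour_integrable_add integK)
    apply (subst contour_integral_neg)
    apply (subst contour_integral_lmul, rule integK)+
    apply simp
    done
  finally show ?thesis .
qed

lemma K1: "K 1 = 2 * of_real pi * \<i> / 4"
proof -
  have "((\<lambda>u. (\<lambda>u. 1 / u^2) u / (u - 2)) has_contour_integral (2 * of_real pi * \<i> * (1 / 2^2))) \<gamma>"
    by (rule Cauchy_integral_circlepath_simple) (auto intro!: holomorphic_intros simp: dist_norm)
  then have "((\<lambda>z. 1 / (z\<^sup>2 * (z - 2) powi 1)) has_contour_integral (2 * of_real pi * \<i> / 4)) \<gamma>"
    by simp
  then show ?thesis unfolding K_def by (rule contour_integral_unique)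
qed

definition kk :: "nat \<Rightarrow> complex" where
  "kk n = -(of_nat n / 2) * (-1/2)^n"

abbreviation "CC \<equiv> 2 * of_real pi * \<i> :: complex"

lemma K_nat: "K (int n) = CC * kk n"
proof (induction n)
  case 0
  then show ?case using K_rec[of 0] by (simp add: kk_def)
next
  case (Suc n)
  show ?case
  proof (cases "n = 0")
    case True
    then show ?thesis using K1 by (simp add: kk_def)
  next
    case False
    have r: "0 = - K (int n) - of_nat n * (K (int n) + 2 * K (int (Suc n)))"
      using K_rec[of "int n"] by (simp add: add.commute)
    have n: "(of_nat n :: complex) \<noteq> 0" using False by simp
    have "K (int (Suc n)) = - (1 + of_nat n) * K (int n) / (2 * of_nat n)"
      using r n by (simp add: field_simps)
    also have "\<dots> = CC * kk (Suc n)" unfolding Suc kk_def using n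
      by (simp add: field_simps)
    finally show ?thesis .
  qed
qed

lemma J0_nat: "J 0 (int e) = -2 * CC * (kk e + kk (Suc e))"
  using J0[of "int e"] K_nat[of e] K_nat[of "Suc e"] by (simp add: algebra_simps)

lemma J1: "J 1 (int e - 1) = CC * (-1/2)^(Suc e)"
proof (cases e)
  case 0
  then show ?thesis using J_rec[of 0 "-1"] J0_nat[of 0] by (simp add: kk_def)
next
  case (Suc m)
  have "J 1 (int e - 1) = J 0 (int (Suc m)) - of_nat (Suc m) * (J 0 (int m) + 3 * J 0 (int (Suc m)) + 2 * J 0 (int (Suc (Suc m))))"
    using J_rec[of 0 "int m"] Suc by (simp add: add_ac)
  also have "\<dots> = CC * (-1/2)^(Suc e)"
    unfolding J0_nat kk_def Suc by (simp add: field_simps)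
  finally show ?thesis .
qed

lemma Jmain: "a \<ge> 1 \<Longrightarrow> J a (int e - 1) = CC * (-1/2)^(a + e)"
proof (induction a arbitrary: e)
  case 0 then show ?case by simp
next
  case (Suc b)
  show ?case
  proof (cases "b = 0")
    case True
    then show ?thesis using J1[of e] by simp
  next
    case False
    then have b: "b \<ge> 1" by simp
    have "J (Suc b) (int e - 1) = J b (int (Suc e) - 1) - of_nat e * (J b (int e - 1) + 3 * J b (int (Suc e) - 1) + 2 * J b (int (Suc (Suc e)) - 1))"
      using J_rec[of b "int e - 1"] by (simp add: add_ac)
    also have "\<dots> = CC * (-1/2)^(Suc b + e)"
      unfolding Suc.IH[OF b] by (simp add: field_simps)
    finally show ?thesis .
  qed
qed

theorem lemma6p3:
  fixes a :: nat and d :: int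
  assumes "a \<ge> 1" and "d \<ge> -1"
  shows "residue (\<lambda>z. f_fun a z / (z\<^sup>2 * (z - 2) powi d)) 2
           = (- 1 / 2 :: complex) powi (int a + d + 1)"
proof -
  define e where "e = nat (d + 1)"
  have de: "d = int e - 1" using assms(2) e_def by simp
  have hol: "(\<lambda>z. f_fun a z / (z\<^sup>2 * (z - 2) powi d)) holomorphic_on (ball 2 (3/2) - {2})"
    by (intro holomorphic_intros holomorphic_on_subset[OF holo_f]) (auto simp: dist_norm)
  have "((\<lambda>z. f_fun a z / (z\<^sup>2 * (z - 2) powi d)) has_contour_integral
          CC * residue (\<lambda>z. f_fun a z / (z\<^sup>2 * (z - 2) powi d)) 2) \<gamma>"
  proof -
    have "cball (2::complex) 1 \<subseteq> ball 2 (3/2)" by (rule cball_subset_ball_iff[THEN iffD2]) simp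
    then show ?thesis using base_residue[OF _ _ _ hol, of 1] by auto
  qed
  then have "J a d = CC * residue (\<lambda>z. f_fun a z / (z\<^sup>2 * (z - 2) powi d)) 2"
    unfolding J_def by (rule contour_integral_unique)
  moreover have "J a d = CC * (-1/2)^(a + e)" unfolding de by (rule Jmain[OF assms(1)])
  ultimately have r: "residue (\<lambda>z. f_fun a z / (z\<^sup>2 * (z - 2) powi d)) 2 = (-1/2)^(a + e)"
    by simp
  have ex: "int a + d + 1 = int (a + e)" using de by simp
  have "(- 1 / 2 :: complex) powi (int a + d + 1) = (-1/2)^(a+e)"
    by (simp only: ex power_int_of_nat)
  then show ?thesis using r by simp
qed

end
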